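(* Fix $\beta\ne0$. Let a learner use policies $\pi^1,\dots,\pi^K$ and maintain value estimates $V_1^k(s_1)$, and suppose $V_1^k(s_1)\ge V_1^{\pi^k}(s_1)$ for all $k\in[K]$. Then $$\mathcal{R}(K)\le\bar\psi_\beta\cdot\mathcal{E}(K).$$
   Context: Episodic finite-horizon MDP with horizon $H$, $K$ episodes, deterministic rewards $r_h\in[0,1]$, fixed initial state $s_1$. For a policy $\pi$ and $\beta\ne0$, $V_h^\pi(s)=\frac1\beta\log\mathbb{E}[e^{\beta\sum_{i=h}^H r_i(s_i,\pi_i(s_i))}\mid s_h=s]$, and $V_1^*=\sup_\pi V_1^\pi$. Regret $\mathcal{R}(K)=\sum_{k=1}^K(V_1^*-V_1^{\pi^k})(s_1)$; exponential regret $\mathcal{E}(K)=\frac1\beta\sum_{k=1}^K[e^{\beta V_1^*(s_1)}-e^{\beta V_1^{\pi^k}(s_1)}]$. Semi-normalizer $\bar\psi_\beta=1$ if $\beta>0$ and $\bar\psi_\beta=e^{-\beta H}$ if $\beta<0$. *)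

theory Defs
  imports "HOL-Probability.Probability"
begin

text \<open>Episodic MDP: transition kernels P h s a (a pmf over next states), deterministic
rewards r h s a, deterministic Markov policies pol h s. Steps are indexed h = 1..H.\<close>

text \<open>exp_val beta P r pol m h s = E[ exp(beta * sum_{i=h}^{h+m-1} r_i(s_i, pi_i(s_i))) | s_h = s ],
computed by conditioning on the first transition (Markov property).\<close>
fun exp_val :: "real \<Rightarrow> (nat \<Rightarrow> 's \<Rightarrow> 'a \<Rightarrow> 's pmf) \<Rightarrow> (nat \<Rightarrow> 's \<Rightarrow> 'a \<Rightarrow> real)
      \<Rightarrow> (nat \<Rightarrow> 's \<Rightarrow> 'a) \<Rightarrow> nat \<Rightarrow> nat \<Rightarrow> 's \<Rightarrow> real" where
  "exp_val beta P r pol 0 h s = 1"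
| "exp_val beta P r pol (Suc m) h s =
     exp (beta * r h s (pol h s)) *
     measure_pmf.expectation (P h s (pol h s)) (\<lambda>s'. exp_val beta P r pol m (Suc h) s')"

definition value_fn :: "real \<Rightarrow> nat \<Rightarrow> (nat \<Rightarrow> 's \<Rightarrow> 'a \<Rightarrow> 's pmf) \<Rightarrow> (nat \<Rightarrow> 's \<Rightarrow> 'a \<Rightarrow> real)
      \<Rightarrow> (nat \<Rightarrow> 's \<Rightarrow> 'a) \<Rightarrow> nat \<Rightarrow> 's \<Rightarrow> real" where
  "value_fn beta H P r pol h s = ln (exp_val beta P r pol (H + 1 - h) h s) / beta"

definition opt_value :: "real \<Rightarrow> nat \<Rightarrow> (nat \<Rightarrow> 's \<Rightarrow> 'a \<Rightarrow> 's pmf) \<Rightarrow> (nat \<Rightarrow> 's \<Rightarrow> 'a \<Rightarrow> real)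
      \<Rightarrow> nat \<Rightarrow> 's \<Rightarrow> real" where
  "opt_value beta H P r h s = (SUP pol. value_fn beta H P r pol h s)"

definition regret :: "real \<Rightarrow> nat \<Rightarrow> (nat \<Rightarrow> 's \<Rightarrow> 'a \<Rightarrow> 's pmf) \<Rightarrow> (nat \<Rightarrow> 's \<Rightarrow> 'a \<Rightarrow> real)
      \<Rightarrow> 's \<Rightarrow> (nat \<Rightarrow> nat \<Rightarrow> 's \<Rightarrow> 'a) \<Rightarrow> nat \<Rightarrow> real" where
  "regret beta H P r s1 pols K =
     (\<Sum>k=1..K. opt_value beta H P r 1 s1 - value_fn beta H P r (pols k) 1 s1)"

definition exp_regret :: "real \<Rightarrow> nat \<Rightarrow> (nat \<Rightarrow> 's \<Rightarrow> 'a \<Rightarrow> 's pmf) \<Rightarrow> (nat \<Rightarrow> 's \<Rightarrow> 'a \<Rightarrow> real)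
      \<Rightarrow> 's \<Rightarrow> (nat \<Rightarrow> nat \<Rightarrow> 's \<Rightarrow> 'a) \<Rightarrow> nat \<Rightarrow> real" where
  "exp_regret beta H P r s1 pols K =
     (1 / beta) * (\<Sum>k=1..K. exp (beta * opt_value beta H P r 1 s1)
                              - exp (beta * value_fn beta H P r (pols k) 1 s1))"

definition semi_normalizer :: "real \<Rightarrow> nat \<Rightarrow> real" where
  "semi_normalizer beta H = (if beta > 0 then 1 else exp (- beta * real H))"

end

theory Submission
  imports Defs
begin

lemma exp_val_bounds:
  assumes r: "\<And>h s a. 0 \<le> r h s a \<and> r h s a \<le> 1"
  shows "exp (min 0 (beta * real m)) \<le> exp_val beta P r pol m h s \<and>
         exp_val beta P r pol m h s \<le> exp (max 0 (beta * real m))"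
proof (induction m arbitrary: h s)
  case 0
  then show ?case by simp
next
  case (Suc m)
  let ?M = "measure_pmf (P h s (pol h s))"
  let ?f = "\<lambda>s'. exp_val beta P r pol m (Suc h) s'"
  have b: "norm (?f x) \<le> exp (max 0 (beta * real m))" for x
  proof -
    have "exp (min 0 (beta * real m)) \<le> ?f x" "?f x \<le> exp (max 0 (beta * real m))"
      using Suc.IH[of "Suc h" x] by auto
    moreover have "0 \<le> ?f x" by (meson calculation(1) exp_ge_zero order_trans)
    ultimately show ?thesis by (simp add: abs_of_nonneg)
  qed
  have int: "integrable ?M ?f"
    by (rule measure_pmf.integrable_const_bound[where B="exp (max 0 (beta * real m))"]) (use b in auto)
  have lo: "exp (min 0 (beta * real m)) \<le> measure_pmf.expectation (P h s (pol h s)) ?f"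
    by (rule measure_pmf.integral_ge_const[OF int]) (use Suc.IH in auto)
  have hi: "measure_pmf.expectation (P h s (pol h s)) ?f \<le> exp (max 0 (beta * real m))"
    by (rule measure_pmf.integral_le_const[OF int]) (use Suc.IH in auto)
  define x where "x = r h s (pol h s)"
  have x: "0 \<le> x" "x \<le> 1" using r x_def by auto
  have e1: "min 0 beta \<le> beta * x \<and> beta * x \<le> max 0 beta"
  proof (cases "beta \<ge> 0")
    case True
    have "0 \<le> beta * x" using True x by simp
    moreover have "beta * x \<le> beta * 1" using True x by (intro mult_left_mono) auto
    ultimately show ?thesis using True by simp
  next
    case False
    have "beta * x \<le> 0" using False x by (simp add: mult_nonpos_nonneg)
    moreover have "beta * 1 \<le> beta * x" using False x by (intro mult_left_mono_neg) auto
    ultimately show ?thesis using False by simp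
  qed
  hence e1: "min 0 beta \<le> beta * x" "beta * x \<le> max 0 beta" by auto
  have mnx: "min 0 beta + min 0 (beta * real m) = min 0 (beta * real (Suc m)) \<and>
     max 0 beta + max 0 (beta * real m) = max 0 (beta * real (Suc m))"
  proof (cases "beta \<ge> 0")
    case True
    have "0 \<le> beta * real m" "0 \<le> beta * real (Suc m)" using True by simp_all
    moreover have eq: "beta * real (Suc m) = beta + beta * real m" by (simp add: algebra_simps)
    ultimately show ?thesis using True by simp
  next
    case False
    have "beta * real m \<le> 0" "beta * real (Suc m) \<le> 0" using False by (simp_all add: mult_nonpos_nonneg)
    moreover have eq: "beta * real (Suc m) = beta + beta * real m" by (simp add: algebra_simps)
    ultimately show ?thesis using False by simp
  qed
  hence mn: "min 0 beta + min 0 (beta * real m) = min 0 (beta * real (Suc m))"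
    and mx: "max 0 beta + max 0 (beta * real m) = max 0 (beta * real (Suc m))" by auto
  have "exp (min 0 (beta * real (Suc m))) = exp (min 0 beta) * exp (min 0 (beta * real m))"
    by (metis mn exp_add)
  also have "\<dots> \<le> exp (beta * x) * measure_pmf.expectation (P h s (pol h s)) ?f"
    by (rule mult_mono) (use e1 lo in auto)
  finally have L: "exp (min 0 (beta * real (Suc m))) \<le> exp (beta * x) * measure_pmf.expectation (P h s (pol h s)) ?f" .
  have "exp (beta * x) * measure_pmf.expectation (P h s (pol h s)) ?f \<le> exp (max 0 beta) * exp (max 0 (beta * real m))"
    by (rule mult_mono) (use e1 hi lo in \<open>auto intro: order_trans[OF exp_ge_zero]\<close>)
  also have "\<dots> = exp (max 0 (beta * real (Suc m)))"
    by (metis mx exp_add)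
  finally have U: "exp (beta * x) * measure_pmf.expectation (P h s (pol h s)) ?f \<le> exp (max 0 (beta * real (Suc m)))" .
  show ?case using L U by (simp add: x_def)
qed

lemma value_bounds:
  assumes "beta \<noteq> 0" and r: "\<And>h s a. 0 \<le> r h s a \<and> r h s a \<le> 1"
  shows "0 \<le> value_fn beta H P r pol 1 s \<and> value_fn beta H P r pol 1 s \<le> real H"
proof -
  let ?e = "exp_val beta P r pol H 1 s"
  have b: "exp (min 0 (beta * real H)) \<le> ?e" "?e \<le> exp (max 0 (beta * real H))"
    using exp_val_bounds[OF r, where m=H and h=1 and s=s and pol=pol and beta=beta and P=P] by auto
  have pos: "0 < ?e" using b(1) exp_gt_zero[of "min 0 (beta * real H)"] by linarith
  have l1: "min 0 (beta * real H) \<le> ln ?e" using b(1) pos by (metis ln_exp ln_le_cancel_iff exp_gt_zero)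
  have l2: "ln ?e \<le> max 0 (beta * real H)" using b(2) pos by (metis ln_exp ln_le_cancel_iff exp_gt_zero)
  have v: "value_fn beta H P r pol 1 s = ln ?e / beta" by (simp add: value_fn_def)
  show ?thesis
  proof (cases "beta > 0")
    case True
    have h0: "0 \<le> beta * real H" using True by simp
    then have "0 \<le> ln ?e" "ln ?e \<le> beta * real H" using l1 l2 by auto
    then have "0 \<le> ln ?e / beta" "ln ?e / beta \<le> real H"
      using True by (simp_all add: pos_divide_le_eq mult.commute)
    then show ?thesis using v by simp
  next
    case False
    then have n: "beta < 0" using assms(1) by simp
    have h0: "beta * real H \<le> 0" using n by (simp add: mult_nonpos_nonneg)
    then have "ln ?e \<le> 0" "beta * real H \<le> ln ?e" using l1 l2 by auto
    then have "0 \<le> ln ?e / beta" "ln ?e / beta \<le> real H"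
      using n by (simp_all add: neg_divide_le_eq divide_nonpos_neg mult.commute)
    then show ?thesis using v by simp
  qed
qed


lemma key_ineq:
  fixes beta x y :: real
  assumes "beta \<noteq> 0" "0 \<le> y" "y \<le> x" "x \<le> real H"
  shows "x - y \<le> semi_normalizer beta H * ((1 / beta) * (exp (beta * x) - exp (beta * y)))"
proof (cases "beta > 0")
  case True
  have "beta * x = beta * y + beta * (x - y)" by (simp add: algebra_simps)
  then have e: "exp (beta * x) = exp (beta * y) * exp (beta * (x - y))"
    by (metis exp_add)
  have g: "exp (beta * (x - y)) - 1 \<ge> beta * (x - y)" using exp_ge_add_one_self[of "beta * (x - y)"] by linarith
  have p: "beta * (x - y) \<ge> 0" using True assms by simp
  have ey: "exp (beta * y) \<ge> 1" using True assms by simp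
  have "exp (beta * x) - exp (beta * y) = exp (beta * y) * (exp (beta * (x - y)) - 1)"
    using e by (simp add: algebra_simps)
  also have "\<dots> \<ge> 1 * (beta * (x - y))"
    using g p ey by (intro mult_mono) auto
  finally have "exp (beta * x) - exp (beta * y) \<ge> beta * (x - y)" by simp
  then have "(exp (beta * x) - exp (beta * y)) / beta \<ge> x - y"
    using True by (simp add: pos_le_divide_eq mult.commute)
  then show ?thesis using True by (simp add: semi_normalizer_def)
next
  case False
  then have n: "beta < 0" using assms(1) by simp
  define c where "c = - beta"
  have c: "c > 0" using n c_def by simp
  have "beta * y = beta * x + c * (x - y)" by (simp add: c_def algebra_simps)
  then have e: "exp (beta * y) = exp (beta * x) * exp (c * (x - y))"
    by (metis exp_add)
  have g: "exp (c * (x - y)) - 1 \<ge> c * (x - y)" using exp_ge_add_one_self[of "c * (x - y)"] by linarith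
  have p: "c * (x - y) \<ge> 0" using c assms by simp
  have ex: "exp (beta * x) \<ge> exp (beta * real H)" using n assms by simp
  have "exp (beta * y) - exp (beta * x) = exp (beta * x) * (exp (c * (x - y)) - 1)"
    using e by (simp add: algebra_simps)
  also have "\<dots> \<ge> exp (beta * real H) * (c * (x - y))"
    using g p ex by (intro mult_mono) auto
  finally have A: "exp (beta * y) - exp (beta * x) \<ge> exp (beta * real H) * (c * (x - y))" .
  have s: "semi_normalizer beta H = exp (c * real H)" using n by (simp add: semi_normalizer_def c_def)
  have "semi_normalizer beta H * ((1 / beta) * (exp (beta * x) - exp (beta * y)))
      = exp (c * real H) * (exp (beta * y) - exp (beta * x)) / c"
  proof -
    have gen: "(1 / (- c)) * (a - b) = (b - a) / c" for a b :: real using c by (simp add: field_simps)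
    have "beta = - c" by (simp add: c_def)
    then show ?thesis using gen s by simp
  qed
  also have "\<dots> \<ge> exp (c * real H) * (exp (beta * real H) * (c * (x - y))) / c"
    using A c by (intro divide_right_mono mult_left_mono) auto
  moreover have "exp (c * real H) * (exp (beta * real H) * (c * (x - y))) / c = x - y"
  proof -
    have u: "exp (c * real H) * exp (beta * real H) = 1"
    proof -
      have "c * real H + beta * real H = 0" by (simp add: c_def)
      then show ?thesis by (metis exp_add exp_zero)
    qed
    have gen: "u * (v * (c * d)) / c = d" if "u * v = 1" for u v d :: real
    proof -
      have "u * (v * (c * d)) = (u * v) * (c * d)" by (simp add: mult.assoc)
      then show ?thesis using that c by simp
    qed
    show ?thesis by (rule gen[OF u])
  qed
  ultimately show ?thesis by simp
qed

theorem lemma11: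
  fixes beta :: real and H K :: nat
    and P :: "nat \<Rightarrow> 's \<Rightarrow> 'a \<Rightarrow> 's pmf" and r :: "nat \<Rightarrow> 's \<Rightarrow> 'a \<Rightarrow> real"
    and s1 :: 's and pols :: "nat \<Rightarrow> nat \<Rightarrow> 's \<Rightarrow> 'a" and Vest :: "nat \<Rightarrow> real"
  assumes "beta \<noteq> 0"
    and "\<And>h s a. 0 \<le> r h s a \<and> r h s a \<le> 1"
    and "\<And>k. k \<in> {1..K} \<Longrightarrow> Vest k \<ge> value_fn beta H P r (pols k) 1 s1"
  shows "regret beta H P r s1 pols K \<le> semi_normalizer beta H * exp_regret beta H P r s1 pols K"
proof -
  let ?O = "opt_value beta H P r 1 s1"
  have vb: "\<And>pol. 0 \<le> value_fn beta H P r pol 1 s1 \<and> value_fn beta H P r pol 1 s1 \<le> real H"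
    using value_bounds[OF assms(1), of r] assms(2) by blast
  have bdd: "bdd_above (range (\<lambda>pol. value_fn beta H P r pol 1 s1))"
    using vb by (auto intro!: bdd_aboveI[where M="real H"])
  have ge: "value_fn beta H P r pol 1 s1 \<le> ?O" for pol
    unfolding opt_value_def by (rule cSUP_upper[OF _ bdd]) simp
  have le: "?O \<le> real H"
    unfolding opt_value_def by (rule cSUP_least) (use vb in auto)
  have "regret beta H P r s1 pols K
      \<le> (\<Sum>k=1..K. semi_normalizer beta H * ((1 / beta) *
           (exp (beta * ?O) - exp (beta * value_fn beta H P r (pols k) 1 s1))))"
    unfolding regret_def
    by (rule sum_mono, rule key_ineq) (use assms(1) vb ge le in auto)
  also have "\<dots> = semi_normalizer beta H * exp_regret beta H P r s1 pols K"
    unfolding exp_regret_def by (simp add: sum_distrib_left)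
  finally show ?thesis .
qed

end
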